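(* Let $U=\mathbb{C}[a,b,c]$ be the commutative polynomial algebra, made into a bialgebra over $\mathbb{C}$ by $\Delta(a)=a\otimes a$, $\Delta(b)=a\otimes b+b\otimes c$, $\Delta(c)=c\otimes c$, $\varepsilon(a)=1$, $\varepsilon(b)=0$, $\varepsilon(c)=1$. Then $U\otimes_{\mathbb{C}}U$, regarded as a $U$-module via $u\cdot(x\otimes y)=\Delta(u)(x\otimes y)$ (i.e. the tensor product $U\otimes U$ in the monoidal category of $U$-modules), is not flat, and in particular not projective, over $U$.
   Context: The comultiplication and counit are extended to algebra homomorphisms $\Delta:U\to U\otimes_{\mathbb{C}}U$, $\varepsilon:U\to\mathbb{C}$. *)

theory Defs
  imports Complex_Main "HOL-Computational_Algebra.Polynomial"
begin

text \<open>U = C[a,b,c] is modelled as iterated univariate polynomials C[a][b][c].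
  U \<otimes>_C U is identified with the polynomial ring in six variables
  a1,b1,c1,a2,b2,c2 (a1 = a\<otimes>1, a2 = 1\<otimes>a etc.), modelled as iterated
  univariate polynomials.\<close>

type_synonym U = "complex poly poly poly"
type_synonym UU = "complex poly poly poly poly poly poly"

definition var_a :: U where "var_a = [:[:[:0, 1:]:]:]"
definition var_b :: U where "var_b = [:[:0, 1:]:]"
definition var_c :: U where "var_c = [:0, 1:]"

definition t_a1 :: UU where "t_a1 = [:[:[:[:[:[:0, 1:]:]:]:]:]:]"
definition t_b1 :: UU where "t_b1 = [:[:[:[:[:0, 1:]:]:]:]:]"
definition t_c1 :: UU where "t_c1 = [:[:[:[:0, 1:]:]:]:]"
definition t_a2 :: UU where "t_a2 = [:[:[:0, 1:]:]:]"
definition t_b2 :: UU where "t_b2 = [:[:0, 1:]:]"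
definition t_c2 :: UU where "t_c2 = [:0, 1:]"

definition const_UU :: "complex \<Rightarrow> UU" where
  "const_UU z = [:[:[:[:[:[:z:]:]:]:]:]:]"

definition Delta :: "U \<Rightarrow> UU" where
  "Delta p =
     poly (map_poly (\<lambda>q. poly (map_poly (\<lambda>r. poly (map_poly const_UU r) (t_a1 * t_a2)) q)
                              (t_a1 * t_b2 + t_b1 * t_c2)) p)
          (t_c1 * t_c2)"

text \<open>The counit (part of the bialgebra structure; not needed for the statement).\<close>
definition eps :: "U \<Rightarrow> complex" where
  "eps p = poly (map_poly (\<lambda>q. poly (map_poly (\<lambda>r. poly r 1) q) 0) p) 1"

definition act_UU :: "U \<Rightarrow> UU \<Rightarrow> UU" where
  "act_UU u x = Delta u * x"

definition is_module :: "('r::comm_ring_1 \<Rightarrow> 'n::ab_group_add \<Rightarrow> 'n) \<Rightarrow> 'n set \<Rightarrow> bool" where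
  "is_module act A \<longleftrightarrow>
     0 \<in> A \<and> (\<forall>x\<in>A. \<forall>y\<in>A. x + y \<in> A) \<and> (\<forall>x\<in>A. - x \<in> A) \<and>
     (\<forall>r. \<forall>x\<in>A. act r x \<in> A) \<and>
     (\<forall>x\<in>A. act 1 x = x) \<and>
     (\<forall>r s. \<forall>x\<in>A. act (r * s) x = act r (act s x)) \<and>
     (\<forall>r s. \<forall>x\<in>A. act (r + s) x = act r x + act s x) \<and>
     (\<forall>r. \<forall>x\<in>A. \<forall>y\<in>A. act r (x + y) = act r x + act r y)"

text \<open>Formal Z-linear combinations of pairs (n,m): finitely supported functions to int.\<close>
definition fs :: "'a \<Rightarrow> 'a \<Rightarrow> int" where
  "fs x = (\<lambda>p. if p = x then 1 else 0)"

text \<open>The subgroup of relations defining the tensor product A \<otimes>_r M (where M is the whole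
  type 'm with action act_m): generated by bilinearity and balancedness relations.
  Then A \<otimes>_r M = (formal sums supported on A \<times> M) / tens_rel.\<close>
inductive_set tens_rel :: "('r::comm_ring_1 \<Rightarrow> 'n::ab_group_add \<Rightarrow> 'n) \<Rightarrow> 'n set \<Rightarrow>
    ('r \<Rightarrow> 'm::ab_group_add \<Rightarrow> 'm) \<Rightarrow> ('n \<times> 'm \<Rightarrow> int) set"
  for act_n A act_m where
  rel_zero: "(\<lambda>p. 0) \<in> tens_rel act_n A act_m"
| rel_add1: "n \<in> A \<Longrightarrow> n' \<in> A \<Longrightarrow>
     (\<lambda>p. fs (n + n', m) p - fs (n, m) p - fs (n', m) p) \<in> tens_rel act_n A act_m"
| rel_add2: "n \<in> A \<Longrightarrow>
     (\<lambda>p. fs (n, m + m') p - fs (n, m) p - fs (n, m') p) \<in> tens_rel act_n A act_m"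
| rel_scal: "n \<in> A \<Longrightarrow>
     (\<lambda>p. fs (act_n r n, m) p - fs (n, act_m r m) p) \<in> tens_rel act_n A act_m"
| rel_plus: "x \<in> tens_rel act_n A act_m \<Longrightarrow> y \<in> tens_rel act_n A act_m \<Longrightarrow>
     (\<lambda>p. x p + y p) \<in> tens_rel act_n A act_m"
| rel_neg: "x \<in> tens_rel act_n A act_m \<Longrightarrow> (\<lambda>p. - x p) \<in> tens_rel act_n A act_m"

text \<open>M (= the whole type 'm with action act_m, assumed to be an r-module) is flat
  with respect to test modules living in the type 'n: for every module A and submodule
  B \<subseteq> A (every injective module map is, up to isomorphism, such an inclusion), the
  induced map B \<otimes> M \<rightarrow> A \<otimes> M is injective, i.e. a formal sum supported on B \<times> M
  which is a relation in A \<otimes> M is already a relation in B \<otimes> M.\<close>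
definition flat_wrt :: "'n::ab_group_add itself \<Rightarrow> ('r::comm_ring_1 \<Rightarrow> 'm::ab_group_add \<Rightarrow> 'm) \<Rightarrow> bool" where
  "flat_wrt _ act_m \<longleftrightarrow>
     (\<forall>(act_n :: 'r \<Rightarrow> 'n \<Rightarrow> 'n) A B.
        is_module act_n A \<and> is_module act_n B \<and> B \<subseteq> A \<longrightarrow>
        (\<forall>z. finite {p. z p \<noteq> 0} \<and> {p. z p \<noteq> 0} \<subseteq> B \<times> UNIV \<and>
             z \<in> tens_rel act_n A act_m \<longrightarrow> z \<in> tens_rel act_n B act_m))"

end

theory Submission
  imports Defs
begin

definition rhom :: "('a::comm_ring_1 \<Rightarrow> 'b::comm_ring_1) \<Rightarrow> bool" where
  "rhom h \<longleftrightarrow> h 0 = 0 \<and> h 1 = 1 \<and> (\<forall>a b. h (a+b) = h a + h b) \<and> (\<forall>a b. h (a*b) = h a * h b)"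

lemma rhom_eval:
  assumes h: "rhom h"
  shows "rhom (\<lambda>p. poly (map_poly h p) x)"
proof -
  have h0: "h 0 = 0" and h1: "h 1 = 1" and ha: "\<And>a b. h (a+b) = h a + h b"
    and hm: "\<And>a b. h (a*b) = h a * h b" using h by (auto simp: rhom_def)
  have madd: "map_poly h (p+q) = map_poly h p + map_poly h q" for p q
    by (intro poly_eqI) (simp add: coeff_map_poly h0 ha)
  have msm: "map_poly h (smult c p) = smult (h c) (map_poly h p)" for c p
    by (rule map_poly_smult) (auto simp: h0 hm)
  have mult: "poly (map_poly h (p*q)) x = poly (map_poly h p) x * poly (map_poly h q) x" for p q
  proof (induction p)
    case 0 then show ?case by simp
  next
    case (pCons a p)
    then show ?case by (simp add: madd msm map_poly_pCons h0 algebra_simps)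
  qed
  show ?thesis unfolding rhom_def using h1 by (simp add: madd mult h0 map_poly_1')
qed

lemma rhom_const: "rhom const_UU"
  by (simp add: rhom_def const_UU_def flip: one_pCons)

lemma rhom_Delta: "rhom Delta"
proof -
  have "rhom (\<lambda>r. poly (map_poly const_UU r) (t_a1 * t_a2))" by (rule rhom_eval[OF rhom_const])
  hence "rhom (\<lambda>q. poly (map_poly (\<lambda>r. poly (map_poly const_UU r) (t_a1 * t_a2)) q) (t_a1 * t_b2 + t_b1 * t_c2))" by (rule rhom_eval)
  hence "rhom (\<lambda>p. poly (map_poly (\<lambda>q. poly (map_poly (\<lambda>r. poly (map_poly const_UU r) (t_a1 * t_a2)) q) (t_a1 * t_b2 + t_b1 * t_c2)) p) (t_c1 * t_c2))" by (rule rhom_eval)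
  thus ?thesis unfolding Delta_def[abs_def] .
qed

lemma D_add: "Delta (p+q) = Delta p + Delta q" and D_mult: "Delta (p*q) = Delta p * Delta q"
  and D_one: "Delta 1 = 1" and D_zero: "Delta 0 = 0"
  using rhom_Delta by (auto simp: rhom_def)

lemma Da: "Delta var_a = t_a1 * t_a2"
  by (simp add: Delta_def var_a_def map_poly_pCons const_UU_def flip: one_pCons)
lemma Db: "Delta var_b = t_a1 * t_b2 + t_b1 * t_c2"
  by (simp add: Delta_def var_b_def map_poly_pCons const_UU_def flip: one_pCons)
lemma Dc: "Delta var_c = t_c1 * t_c2"
  by (simp add: Delta_def var_c_def map_poly_pCons const_UU_def flip: one_pCons)

definition lam :: "UU \<Rightarrow> complex" where
  "lam x = coeff (coeff (coeff (coeff (coeff (coeff x 0) 0) 1) 0) 1) 0"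

lemma lam_add: "lam (x + y) = lam x + lam y" by (simp add: lam_def)
lemma lam_neg: "lam (- x) = - lam x" by (simp add: lam_def)

lemma lamA: "lam (t_a1 * t_a2 * y) = 0"
  by (simp add: lam_def t_a1_def t_a2_def coeff_pCons split: nat.splits)
lemma lamB: "lam ((t_a1 * t_b2 + t_b1 * t_c2) * y) = 0"
  by (simp add: lam_def t_a1_def t_b2_def t_b1_def t_c2_def coeff_pCons distrib_right split: nat.splits)
lemma lamC: "lam (t_c1 * t_c2 * y) = 0"
  by (simp add: lam_def t_c1_def t_c2_def coeff_pCons split: nat.splits)
lemma lam1: "lam (t_a2 * t_b1) = 1"
  by (simp add: lam_def t_a2_def t_b1_def coeff_pCons split: nat.splits)

definition BB :: "U set" where "BB = {n. \<forall>y. lam (Delta n * y) = 0}"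

definition FF :: "U \<times> UU \<Rightarrow> complex" where
  "FF p = lam (Delta (pderiv (fst p)) * snd p)"

definition Phi :: "(U \<times> UU \<Rightarrow> int) \<Rightarrow> complex" where
  "Phi w = (\<Sum>p\<in>{p. w p \<noteq> 0}. of_int (w p) * FF p)"

lemma Phi_sup: "finite S \<Longrightarrow> {p. w p \<noteq> 0} \<subseteq> S \<Longrightarrow> Phi w = (\<Sum>p\<in>S. of_int (w p) * FF p)"
  unfolding Phi_def by (rule sum.mono_neutral_left) auto

lemma sum_fs: "finite S \<Longrightarrow> x \<in> S \<Longrightarrow> (\<Sum>p\<in>S. of_int (fs x p) * G p) = (G x :: complex)"
proof -
  assume a: "finite S" "x \<in> S"
  have "(\<Sum>p\<in>S. of_int (fs x p) * G p) = (\<Sum>p\<in>S. if p = x then G p else 0)"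
    by (rule sum.cong) (auto simp: fs_def)
  also have "\<dots> = G x" using a by simp
  finally show ?thesis .
qed

lemma gen3:
  assumes "(w::U \<times> UU \<Rightarrow> int) = (\<lambda>p. fs x p - fs y p - fs z p)"
  shows "finite {p. w p \<noteq> 0} \<and> Phi w = FF x - FF y - FF z"
proof -
  have sub: "{p. w p \<noteq> 0} \<subseteq> {x,y,z}" using assms by (auto simp: fs_def)
  hence fin: "finite {p. w p \<noteq> 0}" by (rule finite_subset) simp
  have "Phi w = (\<Sum>p\<in>{x,y,z}. of_int (w p) * FF p)" by (rule Phi_sup[OF _ sub]) simp
  also have "\<dots> = (\<Sum>p\<in>{x,y,z}. of_int (fs x p) * FF p) - (\<Sum>p\<in>{x,y,z}. of_int (fs y p) * FF p)
      - (\<Sum>p\<in>{x,y,z}. of_int (fs z p) * FF p)"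
    by (simp add: assms left_diff_distrib sum_subtractf)
  also have "\<dots> = FF x - FF y - FF z" by (simp only: sum_fs[of "{x,y,z}"] finite.intros insert_iff simp_thms)
  finally show ?thesis using fin by simp
qed

lemma gen2:
  assumes "(w::U \<times> UU \<Rightarrow> int) = (\<lambda>p. fs x p - fs y p)"
  shows "finite {p. w p \<noteq> 0} \<and> Phi w = FF x - FF y"
proof -
  have sub: "{p. w p \<noteq> 0} \<subseteq> {x,y}" using assms by (auto simp: fs_def)
  hence fin: "finite {p. w p \<noteq> 0}" by (rule finite_subset) simp
  have "Phi w = (\<Sum>p\<in>{x,y}. of_int (w p) * FF p)" by (rule Phi_sup[OF _ sub]) simp
  also have "\<dots> = (\<Sum>p\<in>{x,y}. of_int (fs x p) * FF p) - (\<Sum>p\<in>{x,y}. of_int (fs y p) * FF p)"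
    by (simp add: assms left_diff_distrib sum_subtractf)
  also have "\<dots> = FF x - FF y" by (simp only: sum_fs[of "{x,y}"] finite.intros insert_iff simp_thms)
  finally show ?thesis using fin by simp
qed

lemma pderiv_ab: "pderiv var_a = 0" "pderiv var_b = 0" "pderiv var_c = 1"
  by (simp_all add: var_a_def var_b_def var_c_def pderiv_pCons)

lemma key:
  assumes "w \<in> tens_rel (*) BB act_UU"
  shows "finite {p. w p \<noteq> 0} \<and> Phi w = 0"
  using assms
proof induction
  case rel_zero
  then show ?case by (simp add: Phi_def)
next
  case (rel_add1 n n' m)
  from gen3[OF refl, of "(n+n',m)" "(n,m)" "(n',m)"] show ?case
    by (simp add: FF_def pderiv_add D_add distrib_right lam_add)
next
  case (rel_add2 n m m')
  from gen3[OF refl, of "(n,m+m')" "(n,m)" "(n,m')"] show ?case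
    by (simp add: FF_def distrib_left lam_add)
next
  case (rel_scal n r m)
  have "lam (Delta n * (Delta (pderiv r) * m)) = 0" using rel_scal by (simp add: BB_def)
  with gen2[OF refl, of "(r*n,m)" "(n, act_UU r m)"]
  show ?case
    by (simp add: FF_def act_UU_def pderiv_mult D_add D_mult distrib_right distrib_left lam_add mult_ac)
next
  case (rel_plus x y)
  let ?S = "{p. x p \<noteq> 0} \<union> {p. y p \<noteq> 0}"
  have fin: "finite ?S" using rel_plus by simp
  have sub: "{p. x p + y p \<noteq> 0} \<subseteq> ?S" by auto
  have "Phi (\<lambda>p. x p + y p) = (\<Sum>p\<in>?S. of_int (x p + y p) * FF p)"
    by (rule Phi_sup[OF fin]) (use sub in auto)
  also have "\<dots> = (\<Sum>p\<in>?S. of_int (x p) * FF p) + (\<Sum>p\<in>?S. of_int (y p) * FF p)"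
    by (simp add: distrib_right sum.distrib)
  also have "\<dots> = Phi x + Phi y"
    using Phi_sup[OF fin, of x] Phi_sup[OF fin, of y] by auto
  finally show ?case using rel_plus finite_subset[OF sub fin] by simp
next
  case (rel_neg x)
  then show ?case by (simp add: Phi_def sum_negf)
qed

lemma tr_diff: "x \<in> tens_rel an A am \<Longrightarrow> y \<in> tens_rel an A am \<Longrightarrow> (\<lambda>p. x p - y p) \<in> tens_rel an A am"
  unfolding diff_conv_add_uminus by (rule rel_plus, assumption, rule rel_neg)

theorem mainTheorem4:
  shows "is_module act_UU (UNIV :: UU set) \<and> \<not> flat_wrt TYPE(U) act_UU"
proof
  show "is_module act_UU (UNIV :: UU set)"
    unfolding is_module_def act_UU_def by (simp add: D_one D_mult D_add distrib_left distrib_right mult.assoc)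
  define m1 where "m1 = t_b2 * t_c1"
  define m2 where "m2 = t_a2 * t_c1"
  define m3 where "m3 = t_a2 * t_b1"
  define z where "z = (\<lambda>p. fs (var_a, m1) p - fs (var_b, m2) p + fs (var_c, m3) p)"
  have modU: "is_module (*) (UNIV :: U set)"
    unfolding is_module_def by (simp add: distrib_left distrib_right mult.assoc)
  have Dneg: "Delta (- x) = - Delta x" for x
    using D_add[of x "-x"] D_zero by (metis add.commute eq_neg_iff_add_eq_0 right_minus)
  have modB: "is_module (*) BB"
    unfolding is_module_def BB_def
  proof (intro conjI ballI allI; (simp only: mem_Collect_eq)?)
    show "\<forall>y. lam (Delta 0 * y) = 0" by (simp add: D_zero lam_def)
  next
    fix x y assume "\<forall>y. lam (Delta x * y) = 0" "\<forall>ya. lam (Delta y * ya) = 0"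
    thus "\<forall>ya. lam (Delta (x + y) * ya) = 0" by (simp add: D_add distrib_right lam_add)
  next
    fix x assume "\<forall>y. lam (Delta x * y) = 0"
    thus "\<forall>y. lam (Delta (- x) * y) = 0" by (simp add: Dneg lam_neg)
  next
    fix r x assume h: "\<forall>y. lam (Delta x * y) = 0"
    show "\<forall>y. lam (Delta (r * x) * y) = 0"
    proof
      fix y show "lam (Delta (r * x) * y) = 0" using h[rule_format, of "Delta r * y"]
        by (simp add: D_mult mult.left_commute mult.commute)
    qed
  qed (simp_all add: distrib_left distrib_right mult.assoc)
  have aB: "var_a \<in> BB" "var_b \<in> BB" "var_c \<in> BB"
    by (simp_all add: BB_def Da Db Dc lamA lamB lamC)
  define P where "P = t_a1 * t_a2 * t_b2 * t_c1"
  define Q where "Q = t_a2 * t_b1 * t_c1 * t_c2"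
  have r1: "(\<lambda>p. fs (var_a * 1, m1) p - fs (1, P) p) \<in> tens_rel (*) UNIV act_UU"
    using rel_scal[of 1 UNIV "(*)" var_a m1 act_UU]
    by (simp add: act_UU_def Da m1_def P_def mult_ac)
  have r2: "(\<lambda>p. fs (var_b * 1, m2) p - fs (1, P + Q) p) \<in> tens_rel (*) UNIV act_UU"
    using rel_scal[of 1 UNIV "(*)" var_b m2 act_UU]
    by (simp add: act_UU_def Db m2_def P_def Q_def algebra_simps)
  have r3: "(\<lambda>p. fs (var_c * 1, m3) p - fs (1, Q) p) \<in> tens_rel (*) UNIV act_UU"
    using rel_scal[of 1 UNIV "(*)" var_c m3 act_UU]
    by (simp add: act_UU_def Dc m3_def Q_def mult_ac)
  have r4: "(\<lambda>p. fs (1, P + Q) p - fs (1, P) p - fs (1, Q) p) \<in> tens_rel (*) UNIV act_UU"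
    by (rule rel_add2) simp
  have zA: "z \<in> tens_rel (*) UNIV act_UU"
  proof -
    have "(\<lambda>p. fs (var_a * 1, m1) p - fs (1, P) p + (fs (var_c * 1, m3) p - fs (1, Q) p)
          - (fs (var_b * 1, m2) p - fs (1, P + Q) p)
          - (fs (1, P + Q) p - fs (1, P) p - fs (1, Q) p)) \<in> tens_rel (*) UNIV act_UU"
      by (intro tr_diff rel_plus r1 r2 r3 r4)
    moreover have "(\<lambda>p. fs (var_a * 1, m1) p - fs (1, P) p + (fs (var_c * 1, m3) p - fs (1, Q) p)
          - (fs (var_b * 1, m2) p - fs (1, P + Q) p)
          - (fs (1, P + Q) p - fs (1, P) p - fs (1, Q) p)) = z"
      by (rule ext) (simp add: z_def)
    ultimately show ?thesis by simp
  qed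
  have zsupp: "{p. z p \<noteq> 0} \<subseteq> {(var_a, m1), (var_b, m2), (var_c, m3)}"
    by (auto simp: z_def fs_def)
  have zfin: "finite {p. z p \<noteq> 0}" by (rule finite_subset[OF zsupp]) simp
  have zB: "{p. z p \<noteq> 0} \<subseteq> BB \<times> UNIV" using zsupp aB by auto
  have "Phi z = (\<Sum>p\<in>{(var_a, m1), (var_b, m2), (var_c, m3)}. of_int (z p) * FF p)"
    by (rule Phi_sup[OF _ zsupp]) simp
  also have "\<dots> = (\<Sum>p\<in>{(var_a, m1), (var_b, m2), (var_c, m3)}. of_int (fs (var_a, m1) p) * FF p)
     - (\<Sum>p\<in>{(var_a, m1), (var_b, m2), (var_c, m3)}. of_int (fs (var_b, m2) p) * FF p)
     + (\<Sum>p\<in>{(var_a, m1), (var_b, m2), (var_c, m3)}. of_int (fs (var_c, m3) p) * FF p)"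
    by (simp add: z_def distrib_right left_diff_distrib sum_subtractf sum.distrib)
  also have "\<dots> = FF (var_a, m1) - FF (var_b, m2) + FF (var_c, m3)"
    by (simp only: sum_fs[of "{(var_a, m1), (var_b, m2), (var_c, m3)}"] finite.intros insert_iff simp_thms)
  also have "\<dots> = 1"
    by (simp add: FF_def pderiv_ab D_zero D_one m3_def lam1)
  finally have "Phi z = 1" .
  hence "z \<notin> tens_rel (*) BB act_UU" using key by fastforce
  thus "\<not> flat_wrt TYPE(U) act_UU"
    unfolding flat_wrt_def
    using modU modB zA zfin zB by blast
qed

end
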